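(* Let $n\ge 3$ and let $(\alpha,\beta)$ satisfy $\beta\ge 0$, $0<\alpha+\beta<n-\beta$ and $\frac{n-\alpha-2\beta}{2n}+\frac{n-\alpha}{2(n-1)}<1$. Then, as $|\xi|\to1^-$ (i.e. for all $\xi\in\mathbb B^n$ with $|\xi|$ sufficiently close to $1$, with a constant depending only on $n,\alpha,\beta$), $$d_{\alpha,\beta}(\xi)\lesssim\begin{cases}(1-|\xi|)^\beta,&\alpha>1,\\ (1-|\xi|)^\beta\log\frac1{1-|\xi|},&\alpha=1,\\ (1-|\xi|)^{\alpha+\beta-1},&\alpha<1.\end{cases}$$
   Context: $d_{\alpha,\beta}(\xi)=\frac{\pi^{n/2}2^{1-\beta}}{\Gamma(n/2)}(1-|\xi|^2)^{\alpha+\beta-1}F\big(\frac{n+\alpha}{2}-1,\frac\alpha2;\frac n2;|\xi|^2\big)$ for $\xi$ in the open unit ball $\mathbb B^n$, where $F$ is the Gauss hypergeometric function; equivalently $d_{\alpha,\beta}(\xi)=\left(\frac{1-|\xi|^2}{2}\right)^\beta\int_{\mathbb S^{n-1}}|\xi-\eta|^{\alpha-n}\mathrm dV(\eta)$. *)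

theory Defs
  imports "HOL-Analysis.Analysis"
begin

definition hyp2F1 :: "real \<Rightarrow> real \<Rightarrow> real \<Rightarrow> real \<Rightarrow> real" where
  "hyp2F1 a b c x =
     (\<Sum>k. pochhammer a k * pochhammer b k / (pochhammer c k * fact k) * x ^ k)"

definition d_ab :: "real \<Rightarrow> real \<Rightarrow> real ^ 'n \<Rightarrow> real" where
  "d_ab \<alpha> \<beta> \<xi> =
     (let n = real CARD('n) in
      pi powr (n / 2) * 2 powr (1 - \<beta>) / Gamma (n / 2)
      * (1 - norm \<xi> ^ 2) powr (\<alpha> + \<beta> - 1)
      * hyp2F1 ((n + \<alpha>) / 2 - 1) (\<alpha> / 2) (n / 2) (norm \<xi> ^ 2))"

end

theory Submission
  imports Defs
begin



lemma poch_R: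
  fixes z :: real
  shows "pochhammer z (Suc m) = rGamma_series z m * fact m * exp (z * ln (real m))"
  unfolding rGamma_series_def by simp

lemma alg_aux:
  fixes Ra Rb Rc F Ea Eb Ec M :: real
  assumes "F > 0" "Rc \<noteq> 0" "Ec > 0" "M \<ge> 0"
  shows "(Ra*F*Ea)*(Rb*F*Eb)/((Rc*F*Ec)*((M+1)*F)) = Ra*Rb/Rc*(Ea*Eb/Ec)/(M+1)"
proof -
  have 1: "(Ra*F*Ea)*(Rb*F*Eb) = (F*F)*(Ra*Rb*Ea*Eb)" "(Rc*F*Ec)*((M+1)*F) = (F*F)*(Rc*Ec*(M+1))"
    by (simp_all add: mult_ac)
  have "F*F \<noteq> 0" using assms by simp
  then have "(Ra*F*Ea)*(Rb*F*Eb)/((Rc*F*Ec)*((M+1)*F)) = (Ra*Rb*Ea*Eb)/(Rc*Ec*(M+1))"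
    unfolding 1 by (rule mult_divide_mult_cancel_left)
  also have "\<dots> = Ra*Rb/Rc*(Ea*Eb/Ec)/(M+1)" using assms by (simp add: field_simps)
  finally show ?thesis .
qed

lemma t_Suc_eq:
  fixes a b c :: real assumes c: "c > 0"
  shows "pochhammer a (Suc m) * pochhammer b (Suc m) / (pochhammer c (Suc m) * fact (Suc m))
     = rGamma_series a m * rGamma_series b m / rGamma_series c m * exp ((a + b - c) * ln (real m)) / (real m + 1)"
proof -
  have pc: "pochhammer c (Suc m) > 0" using c by (simp add: pochhammer_pos)
  have Rc: "rGamma_series c m \<noteq> 0" using pc unfolding rGamma_series_def by simp
  have e: "exp ((a + b - c) * ln (real m)) = exp (a * ln (real m)) * exp (b * ln (real m)) / exp (c * ln (real m))"
    by (simp add: algebra_simps exp_add exp_diff)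
  have f: "(fact (Suc m) :: real) = (real m + 1) * fact m" by (simp add: fact_Suc)
  have fp: "(fact m :: real) > 0" by simp
  show ?thesis
    apply (subst (1 2 3) poch_R)
    unfolding e f
    by (rule alg_aux[OF fp Rc]) simp_all
qed


lemma series_le:
  fixes t g :: "nat \<Rightarrow> real"
  assumes tg: "\<And>k. \<bar>t k\<bar> \<le> g k" and sg: "summable (\<lambda>k. g k * x^k)" and x: "0 \<le> x"
  shows "(\<Sum>k. t k * x^k) \<le> (\<Sum>k. g k * x^k)"
proof -
  have b: "\<bar>t k * x^k\<bar> \<le> g k * x^k" for k
    using tg[of k] x by (simp add: abs_mult mult_right_mono)
  have s: "summable (\<lambda>k. t k * x^k)"
    by (rule summable_comparison_test[OF _ sg]) (use b in auto)
  show ?thesis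
    by (rule suminf_le[OF _ s sg]) (use b abs_le_D1 in blast)
qed

lemma series_le_abs:
  fixes t :: "nat \<Rightarrow> real"
  assumes st: "summable (\<lambda>k. \<bar>t k\<bar>)" and x: "0 \<le> x" "x \<le> 1"
  shows "(\<Sum>k. t k * x^k) \<le> (\<Sum>k. \<bar>t k\<bar>)"
proof -
  have b: "\<bar>t k * x^k\<bar> \<le> \<bar>t k\<bar>" for k
    using x by (simp add: abs_mult mult_left_le power_le_one)
  have s: "summable (\<lambda>k. t k * x^k)"
    by (rule summable_comparison_test[OF _ st]) (use b in auto)
  show ?thesis
    by (rule suminf_le[OF _ s st]) (use b abs_le_D1 in blast)
qed

lemma pw_bound:
  fixes r e :: real
  assumes "0 \<le> r" "r < 1"
  shows "(1 - r^2) powr e \<le> 2 powr \<bar>e\<bar> * (1 - r) powr e"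
proof -
  have eq: "1 - r^2 = (1 + r) * (1 - r)" by (simp add: power2_eq_square algebra_simps)
  have "(1 + r) powr e \<le> 2 powr \<bar>e\<bar>"
  proof (cases "e \<ge> 0")
    case True
    then show ?thesis using assms by (simp add: powr_mono2)
  next
    case False
    have "(1 + r) powr e \<le> (1 + r) powr 0" using False assms by (intro powr_mono) auto
    also have "\<dots> = 1" using assms by simp
    also have "1 \<le> 2 powr \<bar>e\<bar>" by (rule ge_one_powr_ge_zero) auto
    finally show ?thesis .
  qed
  then show ?thesis
    unfolding eq using assms by (simp add: powr_mult mult_right_mono)
qed

theorem lemma2p7:
  fixes \<alpha> \<beta> :: real
  assumes n3: "CARD('n) \<ge> 3"
    and b0: "\<beta> \<ge> 0"
    and ab1: "0 < \<alpha> + \<beta>"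
    and ab2: "\<alpha> + \<beta> < real CARD('n) - \<beta>"
    and ab3: "(real CARD('n) - \<alpha> - 2 * \<beta>) / (2 * real CARD('n))
              + (real CARD('n) - \<alpha>) / (2 * (real CARD('n) - 1)) < 1"
  shows "\<exists>C > 0. \<exists>\<delta> > 0. \<forall>\<xi> :: real ^ 'n.
           1 - \<delta> < norm \<xi> \<and> norm \<xi> < 1 \<longrightarrow>
           d_ab \<alpha> \<beta> \<xi> \<le> C *
             (if \<alpha> > 1 then (1 - norm \<xi>) powr \<beta>
              else if \<alpha> = 1 then (1 - norm \<xi>) powr \<beta> * ln (1 / (1 - norm \<xi>))
              else (1 - norm \<xi>) powr (\<alpha> + \<beta> - 1))"
proof -
  define n where "n = real CARD('n)"
  define a where "a = (n + \<alpha>) / 2 - 1"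
  define b where "b = \<alpha> / 2"
  define c where "c = n / 2"
  define t where "t = (\<lambda>k. pochhammer a k * pochhammer b k / (pochhammer c k * fact k))"
  define P where "P = pi powr (n / 2) * 2 powr (1 - \<beta>) / Gamma (n / 2)"
  have c0: "c > 0" using n3 by (simp add: c_def n_def)
  have P0: "P > 0" unfolding P_def using c0 c_def by simp
  have abc: "a + b - c = \<alpha> - 1" by (simp add: a_def b_def c_def field_simps)
  have t0: "t 0 = 1" by (simp add: t_def)
  define q where "q = (\<lambda>m. rGamma_series a m * rGamma_series b m / rGamma_series c m)"
  have tS: "t (Suc m) = q m * exp ((\<alpha> - 1) * ln (real m)) / (real m + 1)" for m
    using t_Suc_eq[OF c0, where a=a and b=b and m=m] abc by (simp add: t_def q_def)
  have rc: "rGamma c \<noteq> 0" using c0 by (auto simp: rGamma_eq_zero_iff)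
  have qlim: "q \<longlonglongrightarrow> rGamma a * rGamma b / rGamma c"
    unfolding q_def by (intro tendsto_intros rc)
  obtain Q where Q0: "Q > 0" and Q: "\<And>m. \<bar>q m\<bar> \<le> Q"
    using convergent_imp_Bseq[OF convergentI[OF qlim]] by (auto elim!: BseqE)
  have dform: "d_ab \<alpha> \<beta> \<xi> = P * (1 - norm \<xi> ^ 2) powr (\<alpha> + \<beta> - 1) * (\<Sum>k. t k * (norm \<xi> ^ 2) ^ k)"
    for \<xi> :: "real ^ 'n"
    unfolding d_ab_def Let_def hyp2F1_def t_def P_def a_def b_def c_def n_def by simp
  have xr: "0 \<le> r \<Longrightarrow> r < 1 \<Longrightarrow> 0 \<le> r^2 \<and> r^2 < 1 \<and> r^2 \<le> r" for r :: real
  proof -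
    assume r: "0 \<le> r" "r < 1"
    have "r * r \<le> r * 1" using r by (intro mult_left_mono) auto
    then show ?thesis using r by (simp add: power2_eq_square)
  qed
  define G where "G = (\<lambda>\<xi> :: real ^ 'n. (if \<alpha> > 1 then (1 - norm \<xi>) powr \<beta>
              else if \<alpha> = 1 then (1 - norm \<xi>) powr \<beta> * ln (1 / (1 - norm \<xi>))
              else (1 - norm \<xi>) powr (\<alpha> + \<beta> - 1)))"
  consider "\<alpha> > 1" | "\<alpha> = 1" | "\<alpha> < 1" by linarith
  then show ?thesis
  proof cases
    case 1
    define \<gamma> where "\<gamma> = \<alpha> - 1"
    have g0: "\<gamma> > 0" using 1 by (simp add: \<gamma>_def)
    have Rg: "rGamma_series \<gamma> m > 0" for m
      unfolding rGamma_series_def using g0 by (simp add: pochhammer_pos)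
    have rg: "rGamma \<gamma> \<noteq> 0" using g0 by (auto simp: rGamma_eq_zero_iff)
    have "(\<lambda>m. q m / rGamma_series \<gamma> m) \<longlonglongrightarrow> (rGamma a * rGamma b / rGamma c) / rGamma \<gamma>"
      by (intro tendsto_intros qlim rg)
    then have "Bseq (\<lambda>m. q m / rGamma_series \<gamma> m)" by (intro convergent_imp_Bseq convergentI)
    then obtain Q2 where Q2: "\<And>m. \<bar>q m / rGamma_series \<gamma> m\<bar> \<le> Q2"
      by (elim BseqE) (auto simp del: abs_divide)
    define u where "u = (\<lambda>k. pochhammer \<gamma> k / fact k)"
    have u0: "u k \<ge> 0" for k unfolding u_def using g0 by (simp add: pochhammer_pos less_imp_le)
    have uS: "u (Suc m) = rGamma_series \<gamma> m * exp (\<gamma> * ln (real m)) / (real m + 1)" for m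
    proof -
      have f: "(fact (Suc m) :: real) = (real m + 1) * fact m" by (simp add: fact_Suc)
      show ?thesis unfolding u_def poch_R f by simp
    qed
    define M where "M = max 1 Q2"
    have tb: "\<bar>t k\<bar> \<le> M * u k" for k
    proof (cases k)
      case 0 then show ?thesis by (simp add: t0 u_def M_def)
    next
      case (Suc m)
      have "t (Suc m) = (q m / rGamma_series \<gamma> m) * u (Suc m)"
        unfolding tS uS using Rg[of m] by (simp add: \<gamma>_def)
      then have "\<bar>t (Suc m)\<bar> = \<bar>q m / rGamma_series \<gamma> m\<bar> * u (Suc m)"
        using u0 by (simp add: abs_mult)
      also have "\<dots> \<le> M * u (Suc m)"
        using Q2[of m] u0[of "Suc m"] by (intro mult_right_mono) (auto simp: M_def)
      finally show ?thesis using Suc by simp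
    qed
    have usum: "(\<lambda>k. M * u k * x^k) sums (M * (1 - x) powr (- \<gamma>))" if x: "0 \<le> x" "x < 1" for x
    proof -
      have "(\<lambda>k. ((- \<gamma>) gchoose k) * (- x)^k) sums (1 + - x) powr (- \<gamma>)"
        by (rule gen_binomial_real) (use x in auto)
      moreover have "((- \<gamma>) gchoose k) * (- x)^k = u k * x^k" for k
      proof -
        have m1: "(-1::real)^k * (-1)^k = 1" by (simp add: power_mult_distrib[symmetric])
        have "((- \<gamma>) gchoose k) * (- x)^k = ((-1)^k * (-1)^k) * (pochhammer \<gamma> k / fact k) * x^k"
          by (simp add: gbinomial_pochhammer power_minus[of x])
        then show ?thesis unfolding m1 u_def by simp
      qed
      ultimately have "(\<lambda>k. u k * x^k) sums (1 - x) powr (- \<gamma>)" by simp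
      from sums_mult[OF this, of M] show ?thesis by (simp add: mult.assoc)
    qed
    have M0: "M > 0" by (simp add: M_def)
    have C0: "P * M * 2 powr \<beta> > 0" using P0 M0 by simp
    have "\<forall>\<xi> :: real ^ 'n. 1 - 1 < norm \<xi> \<and> norm \<xi> < 1 \<longrightarrow> d_ab \<alpha> \<beta> \<xi> \<le> P * M * 2 powr \<beta> * G \<xi>"
    proof (intro allI impI)
      fix \<xi> :: "real ^ 'n"
      assume r: "1 - 1 < norm \<xi> \<and> norm \<xi> < 1"
      define x where "x = norm \<xi> ^ 2"
      have x: "0 \<le> x" "x < 1" using xr[of "norm \<xi>"] r by (auto simp: x_def)
      have F: "(\<Sum>k. t k * x^k) \<le> M * (1 - x) powr (- \<gamma>)"
      proof -
        have "(\<Sum>k. t k * x^k) \<le> (\<Sum>k. M * u k * x^k)"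
          by (rule series_le) (use tb sums_summable[OF usum[OF x]] x in auto)
        also have "\<dots> = M * (1 - x) powr (- \<gamma>)" using usum[OF x] by (rule sums_unique[symmetric])
        finally show ?thesis .
      qed
      have "d_ab \<alpha> \<beta> \<xi> = P * (1 - x) powr (\<alpha> + \<beta> - 1) * (\<Sum>k. t k * x^k)"
        unfolding dform x_def ..
      also have "\<dots> \<le> P * (1 - x) powr (\<alpha> + \<beta> - 1) * (M * (1 - x) powr (- \<gamma>))"
        using F P0 by (intro mult_left_mono) auto
      also have "\<dots> = P * M * ((1 - x) powr (\<alpha> + \<beta> - 1) * (1 - x) powr (- \<gamma>))" by simp
      also have "(1 - x) powr (\<alpha> + \<beta> - 1) * (1 - x) powr (- \<gamma>) = (1 - x) powr \<beta>"
        using x by (simp add: powr_add[symmetric] \<gamma>_def)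
      also have "(1 - x) powr \<beta> \<le> 2 powr \<bar>\<beta>\<bar> * (1 - norm \<xi>) powr \<beta>"
        unfolding x_def by (rule pw_bound) (use r in auto)
      finally have "d_ab \<alpha> \<beta> \<xi> \<le> P * M * (2 powr \<beta> * (1 - norm \<xi>) powr \<beta>)"
        using P0 M0 b0 by (simp add: mult_left_mono)
      then show "d_ab \<alpha> \<beta> \<xi> \<le> P * M * 2 powr \<beta> * G \<xi>"
        using 1 by (simp add: mult.assoc G_def)
    qed
    then have "\<exists>C>0. \<exists>\<delta>>0. \<forall>\<xi> :: real ^ 'n. 1 - \<delta> < norm \<xi> \<and> norm \<xi> < 1 \<longrightarrow> d_ab \<alpha> \<beta> \<xi> \<le> C * G \<xi>"
      using C0 zero_less_one by blast
    then show ?thesis unfolding G_def .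
  next
    case 2
    define g where "g = (\<lambda>k. if k = 0 then 1 else Q / real k)"
    have tb: "\<bar>t k\<bar> \<le> g k" for k
    proof (cases k)
      case 0 then show ?thesis by (simp add: t0 g_def)
    next
      case (Suc m)
      have "t (Suc m) = q m / (real m + 1)" unfolding tS using 2 by simp
      then have "\<bar>t (Suc m)\<bar> = \<bar>q m\<bar> / (real m + 1)" by simp
      also have "\<dots> \<le> Q / (real m + 1)" using Q[of m] by (intro divide_right_mono) auto
      finally show ?thesis using Suc by (simp add: g_def add.commute)
    qed
    have gsum: "(\<lambda>k. g k * x^k) sums (1 + Q * (- ln (1 - x)))" if x: "0 \<le> x" "x < 1" for x
    proof -
      have "(\<lambda>n. - ((- (- x))^n) / of_nat n) sums ln (1 + - x)"
        by (rule ln_series') (use x in auto)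
      then have "(\<lambda>n. - (- (x^n) / of_nat n)) sums (- ln (1 - x))"
        by (intro sums_minus) simp
      then have "(\<lambda>n. Q * (x^n / of_nat n)) sums (Q * (- ln (1 - x)))"
        by (intro sums_mult) simp
      from sums_add[OF sums_single[of 0 "\<lambda>_. 1::real"] this]
      have "(\<lambda>n. (if n = 0 then 1 else 0) + Q * (x^n / of_nat n)) sums (1 + Q * (- ln (1 - x)))"
        by simp
      moreover have "(\<lambda>n. (if n = 0 then 1 else 0) + Q * (x^n / of_nat n)) = (\<lambda>k. g k * x^k)"
        by (auto simp: g_def fun_eq_iff)
      ultimately show ?thesis by simp
    qed
    have C0: "P * 2 powr \<beta> * (1 + Q) > 0" using P0 Q0 by simp
    have "\<forall>\<xi> :: real ^ 'n. 1 - exp (-1) < norm \<xi> \<and> norm \<xi> < 1 \<longrightarrow> d_ab \<alpha> \<beta> \<xi> \<le> P * 2 powr \<beta> * (1 + Q) * G \<xi>"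
    proof (intro allI impI)
      fix \<xi> :: "real ^ 'n"
      assume r: "1 - exp (-1) < norm \<xi> \<and> norm \<xi> < 1"
      define x where "x = norm \<xi> ^ 2"
      define r where "r = norm \<xi>"
      have r0: "0 \<le> r" "r < 1" "1 - r < exp (-1)" using r by (auto simp: r_def)
      have x: "0 \<le> x" "x < 1" "x \<le> r" using xr[of "norm \<xi>"] r by (auto simp: x_def r_def)
      define L1 where "L1 = ln (1 / (1 - r))"
      define L2 where "L2 = - ln (1 - x)"
      have L1e: "L1 = - ln (1 - r)" using r0 by (simp add: L1_def ln_div)
      have "ln (1 - r) < ln (exp (-1))" using r0 by (subst ln_less_cancel_iff) auto
      then have L1g: "1 \<le> L1" unfolding L1e by simp
      have "ln (1 - r) \<le> ln (1 - x)" using x r0 by (subst ln_le_cancel_iff) auto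
      then have L21: "L2 \<le> L1" unfolding L1e L2_def by simp
      have L20: "0 \<le> L2" unfolding L2_def using x by (simp add: ln_le_zero_iff)
      have F: "(\<Sum>k. t k * x^k) \<le> 1 + Q * L2"
      proof -
        have "(\<Sum>k. t k * x^k) \<le> (\<Sum>k. g k * x^k)"
          by (rule series_le) (use tb sums_summable[OF gsum[OF x(1,2)]] x in auto)
        also have "\<dots> = 1 + Q * L2" unfolding L2_def using gsum[OF x(1,2)] by (rule sums_unique[symmetric])
        finally show ?thesis .
      qed
      have F2: "1 + Q * L2 \<le> (1 + Q) * L1"
      proof -
        have "Q * L2 \<le> Q * L1" using L21 Q0 by (intro mult_left_mono) auto
        then show ?thesis using L1g by (simp add: algebra_simps)
      qed
      have pb: "(1 - x) powr \<beta> \<le> 2 powr \<beta> * (1 - r) powr \<beta>"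
        using pw_bound[of r \<beta>] r0 b0 by (simp add: x_def r_def)
      have "d_ab \<alpha> \<beta> \<xi> = P * (1 - x) powr \<beta> * (\<Sum>k. t k * x^k)"
        unfolding dform x_def using 2 by simp
      also have "\<dots> \<le> P * (1 - x) powr \<beta> * (1 + Q * L2)"
        using F P0 by (intro mult_left_mono) auto
      also have "\<dots> \<le> P * (2 powr \<beta> * (1 - r) powr \<beta>) * ((1 + Q) * L1)"
        using pb F2 P0 L20 Q0 by (intro mult_mono mult_left_mono) auto
      also have "\<dots> = P * 2 powr \<beta> * (1 + Q) * G \<xi>"
        using 2 by (simp add: G_def r_def L1_def)
      finally show "d_ab \<alpha> \<beta> \<xi> \<le> P * 2 powr \<beta> * (1 + Q) * G \<xi>" .
    qed
    then have "\<exists>C>0. \<exists>\<delta>>0. \<forall>\<xi> :: real ^ 'n. 1 - \<delta> < norm \<xi> \<and> norm \<xi> < 1 \<longrightarrow> d_ab \<alpha> \<beta> \<xi> \<le> C * G \<xi>"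
      using C0 exp_gt_zero by blast
    then show ?thesis unfolding G_def .
  next
    case 3
    define h where "h = (\<lambda>m::nat. exp ((\<alpha> - 1) * ln (real m)) / (real m + 1))"
    define w where "w = (\<lambda>m::nat. (if m = 0 then 1 else 0) + real m powr (\<alpha> - 2))"
    have h0: "h m \<ge> 0" for m by (simp add: h_def)
    have hw: "h m \<le> w m" for m
    proof (cases "m = 0")
      case True then show ?thesis by (simp add: h_def w_def)
    next
      case False
      then have m: "real m \<ge> 1" by simp
      have "h m = real m powr (\<alpha> - 1) / (real m + 1)" using False by (simp add: h_def powr_def)
      also have "\<dots> \<le> real m powr (\<alpha> - 1) / real m" using m by (intro divide_left_mono) auto
      also have "\<dots> = real m powr (\<alpha> - 1 - 1)"
        using m by (simp add: powr_diff power2_eq_square)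
      also have "\<alpha> - 1 - 1 = \<alpha> - 2" by simp
      finally show ?thesis using False by (simp add: w_def)
    qed
    have sw: "summable w" unfolding w_def
      by (intro summable_add summable_single) (use 3 summable_real_powr_iff in auto)
    have sh: "summable h"
      by (rule summable_comparison_test[OF _ sw]) (use hw h0 in auto)
    have tSb: "\<bar>t (Suc m)\<bar> \<le> Q * h m" for m
    proof -
      have "\<bar>t (Suc m)\<bar> = \<bar>q m\<bar> * h m" unfolding tS h_def by (simp add: abs_mult)
      also have "\<dots> \<le> Q * h m" using Q[of m] h0[of m] by (intro mult_right_mono) auto
      finally show ?thesis .
    qed
    have "summable (\<lambda>m. \<bar>t (Suc m)\<bar>)"
      by (rule summable_comparison_test[OF _ summable_mult[OF sh, of Q]]) (use tSb in auto)
    then have st: "summable (\<lambda>k. \<bar>t k\<bar>)" by (subst (asm) summable_Suc_iff)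
    define S where "S = (\<Sum>k. \<bar>t k\<bar>)"
    have S0: "S \<ge> 0" unfolding S_def by (intro suminf_nonneg st) auto
    define e where "e = \<alpha> + \<beta> - 1"
    have C0: "P * 2 powr \<bar>e\<bar> * (S + 1) > 0" using P0 S0 by (simp add: add_nonneg_pos)
    have "\<forall>\<xi> :: real ^ 'n. 1 - 1 < norm \<xi> \<and> norm \<xi> < 1 \<longrightarrow> d_ab \<alpha> \<beta> \<xi> \<le> P * 2 powr \<bar>e\<bar> * (S + 1) * G \<xi>"
    proof (intro allI impI)
      fix \<xi> :: "real ^ 'n"
      assume r: "1 - 1 < norm \<xi> \<and> norm \<xi> < 1"
      define x where "x = norm \<xi> ^ 2"
      define r where "r = norm \<xi>"
      have r0: "0 \<le> r" "r < 1" using r by (auto simp: r_def)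
      have x: "0 \<le> x" "x < 1" using xr[of "norm \<xi>"] r by (auto simp: x_def r_def)
      have F: "(\<Sum>k. t k * x^k) \<le> S"
        unfolding S_def by (rule series_le_abs[OF st]) (use x in auto)
      have pb: "(1 - x) powr e \<le> 2 powr \<bar>e\<bar> * (1 - r) powr e"
        using pw_bound[of r e] r0 by (simp add: x_def r_def)
      have "d_ab \<alpha> \<beta> \<xi> = P * (1 - x) powr e * (\<Sum>k. t k * x^k)"
        unfolding dform x_def e_def by simp
      also have "\<dots> \<le> P * (1 - x) powr e * S"
        using F P0 by (intro mult_left_mono) auto
      also have "\<dots> \<le> P * (2 powr \<bar>e\<bar> * (1 - r) powr e) * (S + 1)"
        using pb P0 S0 by (intro mult_mono mult_left_mono) auto
      also have "\<dots> = P * 2 powr \<bar>e\<bar> * (S + 1) * G \<xi>"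
        using 3 by (simp add: G_def r_def e_def)
      finally show "d_ab \<alpha> \<beta> \<xi> \<le> P * 2 powr \<bar>e\<bar> * (S + 1) * G \<xi>" .
    qed
    then have "\<exists>C>0. \<exists>\<delta>>0. \<forall>\<xi> :: real ^ 'n. 1 - \<delta> < norm \<xi> \<and> norm \<xi> < 1 \<longrightarrow> d_ab \<alpha> \<beta> \<xi> \<le> C * G \<xi>"
      using C0 zero_less_one by blast
    then show ?thesis unfolding G_def .
  qed
qed

end
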